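(* For every function $f:\mathbb{N}\to\mathbb{N}$ and all positive integers $a$ and $d$, the set $\{2^{f(n)}(a+dn)\mid n\in\mathbb{N}\}$ is a sufficient set.
   Context: $\mathbb{N}=\{0,1,2,\dots\}$. Let $T:\mathbb{Z}\to\mathbb{Z}$ be $T(x)=x/2$ if $x$ is even and $T(x)=(3x+1)/2$ if $x$ is odd. The $T$-orbit of $x$ is the sequence $x,T(x),T^2(x),\dots$. Two positive integers $x,y$ merge if there exist nonnegative integers $k,j$ with $T^k(x)=T^j(y)$. A set $S$ of positive integers is sufficient if every positive integer merges with some element of $S$. *)

theory Defs
  imports Main
begin

definition collatzT :: "int \<Rightarrow> int" where
  "collatzT x = (if even x then x div 2 else (3 * x + 1) div 2)"

definition merge :: "int \<Rightarrow> int \<Rightarrow> bool" where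
  "merge x y \<longleftrightarrow> (\<exists>k j :: nat. (collatzT ^^ k) x = (collatzT ^^ j) y)"

definition sufficient :: "int set \<Rightarrow> bool" where
  "sufficient S \<longleftrightarrow> (\<forall>s\<in>S. s > 0) \<and> (\<forall>x::int. x > 0 \<longrightarrow> (\<exists>y\<in>S. merge x y))"

end

theory Submission imports Defs "HOL-Number_Theory.Number_Theory" begin

lemma fps: "(f ^^ Suc n) x = (f ^^ n) (f x)"
  by (simp only: funpow_Suc_right comp_apply)

lemma T_double: "collatzT (2*z) = z"
  by (simp add: collatzT_def)

lemma funpow_double: "(collatzT ^^ k) (2^k * z) = z"
proof (induction k arbitrary: z)
  case 0 then show ?case by simp
next
  case (Suc k)
  have "(collatzT ^^ Suc k) (2^Suc k * z) = (collatzT ^^ k) (collatzT (2 * (2^k*z)))"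
    by (simp del: funpow.simps add: fps mult.assoc)
  also have "\<dots> = z" using Suc by (simp add: T_double)
  finally show ?case .
qed

lemma T_oddstep: "odd y \<Longrightarrow> collatzT y = (3*y+1) div 2"
  by (simp add: collatzT_def)

lemma funpow_gadget: "(collatzT ^^ n) (2^n * u - 1) = 3^n * u - 1"
proof (induction n arbitrary: u)
  case 0 then show ?case by simp
next
  case (Suc n)
  have o: "odd (2^Suc n * u - 1)" by simp
  have "collatzT (2^Suc n * u - 1) = 2^n * (3*u) - 1"
  proof -
    have "3*(2^Suc n * u - 1) + 1 = 2 * (2^n*(3*u) - 1)" by (simp add: algebra_simps)
    then show ?thesis using T_oddstep[OF o] by simp
  qed
  then have "(collatzT ^^ Suc n) (2^Suc n * u - 1) = (collatzT ^^ n) (2^n * (3*u) - 1)"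
    by (simp del: funpow.simps add: fps)
  also have "\<dots> = 3^n*(3*u) - 1" by (rule Suc.IH)
  also have "\<dots> = 3^Suc n * u - 1" by simp
  finally show ?case .
qed

lemma T_shift: "\<exists>m::nat. \<forall>q. (collatzT ^^ s) (y + 2^s*q) = (collatzT ^^ s) y + 3^m * q"
proof (induction s arbitrary: y)
  case 0 then show ?case by auto
next
  case (Suc s)
  show ?case
  proof (cases "even y")
    case True
    obtain m where m: "\<forall>q. (collatzT ^^ s) (y div 2 + 2^s*q) = (collatzT ^^ s) (y div 2) + 3^m * q"
      using Suc by blast
    have "\<forall>q. (collatzT ^^ Suc s) (y + 2^Suc s*q) = (collatzT ^^ Suc s) y + 3^m * q"
    proof
      fix q
      have e: "collatzT (y + 2^Suc s*q) = y div 2 + 2^s*q" using True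
        by (auto simp add: collatzT_def elim!: evenE)
      have e2: "collatzT y = y div 2" using True by (simp add: collatzT_def)
      show "(collatzT ^^ Suc s) (y + 2^Suc s*q) = (collatzT ^^ Suc s) y + 3^m * q"
      proof -
        have "(collatzT ^^ Suc s) (y + 2^Suc s*q) = (collatzT ^^ s) (collatzT (y + 2^Suc s*q))" by (rule fps)
        also have "\<dots> = (collatzT ^^ s) (y div 2) + 3^m * q" using e m by simp
        also have "\<dots> = (collatzT ^^ Suc s) y + 3^m * q" using fps[of s collatzT y] e2 by simp
        finally show ?thesis .
      qed
    qed
    then show ?thesis by blast
  next
    case False
    obtain m where m: "\<forall>q. (collatzT ^^ s) (collatzT y + 2^s*q) = (collatzT ^^ s) (collatzT y) + 3^m * q"
      using Suc by blast
    have "\<forall>q. (collatzT ^^ Suc s) (y + 2^Suc s*q) = (collatzT ^^ Suc s) y + 3^Suc m * q"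
    proof
      fix q
      have o: "odd (y + 2^Suc s*q)" using False by simp
      have "3*(y + 2^Suc s*q) + 1 = (3*y+1) + 2*(2^s*(3*q))" by (simp add: algebra_simps)
      moreover have "even (3*y+1)" using False by simp
      ultimately have e: "collatzT (y + 2^Suc s*q) = collatzT y + 2^s*(3*q)"
        using T_oddstep[OF o] T_oddstep[OF False] by (auto elim!: evenE)
      show "(collatzT ^^ Suc s) (y + 2^Suc s*q) = (collatzT ^^ Suc s) y + 3^Suc m * q"
      proof -
        have "(collatzT ^^ Suc s) (y + 2^Suc s*q) = (collatzT ^^ s) (collatzT (y + 2^Suc s*q))" by (rule fps)
        also have "\<dots> = (collatzT ^^ s) (collatzT y) + 3^m * (3*q)" using e m by simp
        also have "\<dots> = (collatzT ^^ Suc s) y + 3^Suc m * q" using fps[of s collatzT y] by simp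
        finally show ?thesis .
      qed
    qed
    then show ?thesis by blast
  qed
qed

lemma T_pos: "x > 0 \<Longrightarrow> collatzT x > 0"
  by (auto simp add: collatzT_def elim!: evenE)

lemma funpow_pos: "x > 0 \<Longrightarrow> (collatzT ^^ i) x > 0"
  by (induction i) (auto simp add: T_pos)

lemma merge_back: "merge x z \<Longrightarrow> (collatzT ^^ j) y = z \<Longrightarrow> merge x y"
  unfolding merge_def by (metis funpow_add comp_apply)

lemma merge_refl_orbit: "merge x ((collatzT ^^ i) x)"
  unfolding merge_def by (metis funpow_0)

lemma exists_non3: "x > 0 \<Longrightarrow> \<exists>i. \<not> 3 dvd (collatzT ^^ i) x"
proof (induction x rule: measure_induct_rule[where f = nat])
  case (less x)
  show ?case
  proof (cases "3 dvd x")
    case False then show ?thesis by (metis funpow_0)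
  next
    case True
    show ?thesis
    proof (cases "even x")
      case True
      then have "collatzT x = x div 2" by (simp add: collatzT_def)
      moreover have "nat (x div 2) < nat x" "x div 2 > 0" using less.prems True by (auto elim!: evenE)
      ultimately obtain i where "\<not> 3 dvd (collatzT ^^ i) (collatzT x)" using less by metis
      then show ?thesis by (metis funpow_Suc_right comp_apply)
    next
      case False
      then obtain k where k: "x = 2*k+1" by (metis oddE)
      have "3*x+1 = 2*(3*k+2)" using k by simp
      then have c: "2 * collatzT x = 3*x+1" using False by (simp add: collatzT_def)
      have "\<not> 3 dvd collatzT x"
      proof
        assume "3 dvd collatzT x"
        then have "3 dvd 3*x+1" using c by (metis dvd_mult)
        then show False by presburger
      qed
      then have "\<not> 3 dvd (collatzT ^^ 1) x" by simp
      then show ?thesis by blast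
    qed
  qed
qed


lemma decomp: fixes p D :: int assumes "p > 1" "D > 0"
  shows "\<exists>t e. D = p^t * e \<and> \<not> p dvd e \<and> e > 0"
  using assms(2)
proof (induction D rule: measure_induct_rule[where f = nat])
  case (less D)
  show ?case
  proof (cases "p dvd D")
    case False then show ?thesis using less.prems by (metis power_0 mult_1)
  next
    case True
    then obtain D' where D': "D = p * D'" by (auto elim: dvdE)
    have "D' > 0" using less.prems D' assms(1) by (simp add: zero_less_mult_iff)
    moreover have "nat D' < nat D" using D' assms(1) \<open>D' > 0\<close> by simp
    ultimately obtain t e where "D' = p^t * e" "\<not> p dvd e" "e > 0" using less by blast
    then have "D = p^Suc t * e" using D' by simp
    then show ?thesis using \<open>\<not> p dvd e\<close> \<open>e > 0\<close> by blast
  qed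
qed

lemma prime3: "prime (3::int)" by simp

lemma not3_mult: fixes a b :: int shows "\<not> 3 dvd a \<Longrightarrow> \<not> 3 dvd b \<Longrightarrow> \<not> 3 dvd a * b"
  using prime3 prime_dvd_mult_iff by blast

lemma cube_lift: fixes g c :: int assumes "g - 1 = 3^N * c" "\<not> 3 dvd c" "N \<ge> 1"
  shows "\<exists>c'. g^3 - 1 = 3^(N+1) * c' \<and> \<not> 3 dvd c'"
proof -
  define h where "h = 3^(N-1)*c"
  have N: "(3::int)^N = 3 * 3^(N-1)" using assms(3) by (metis power_Suc Suc_diff_1 less_le_trans zero_less_one)
  have g: "g = 1 + 3*h" using assms(1) N h_def by simp
  have "g^3 - 1 = (g-1) * (3*(1 + 3*h + 3*h^2))" using g by (simp add: power2_eq_square power3_eq_cube algebra_simps)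
  also have "\<dots> = 3^(N+1) * (c * (1 + 3*h + 3*h^2))" using assms(1) by (simp add: algebra_simps)
  finally have eq: "g^3 - 1 = 3^(N+1) * (c * (1 + 3*h + 3*h^2))" .
  have "\<not> 3 dvd (1 + 3*h + 3*h^2)" by presburger
  then have "\<not> 3 dvd c * (1 + 3*h + 3*h^2)" using assms(2) not3_mult by blast
  then show ?thesis using eq by blast
qed

lemma pow3_lift: fixes g c :: int assumes "g - 1 = 3^N * c" "\<not> 3 dvd c" "N \<ge> 1"
  shows "\<exists>c'. g^(3^s) - 1 = 3^(N+s) * c' \<and> \<not> 3 dvd c'"
proof (induction s)
  case 0 then show ?case using assms by auto
next
  case (Suc s)
  then obtain c' where c': "g^(3^s) - 1 = 3^(N+s) * c'" "\<not> 3 dvd c'" by blast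
  from cube_lift[OF c'] assms(3) obtain c'' where "(g^(3^s))^3 - 1 = 3^(N+s+1) * c''" "\<not> 3 dvd c''" by auto
  moreover have "(g^(3^s))^3 = g^(3^Suc s)" by (simp add: power_mult[symmetric] mult.commute)
  ultimately show ?case by auto
qed

lemma binom_cong: fixes g :: int assumes "3^N dvd g - 1" "N \<ge> 1"
  shows "[g^i = 1 + int i * (g-1)] (mod 3^(N+1))"
proof (induction i)
  case 0 then show ?case by simp
next
  case (Suc i)
  obtain k where k: "g - 1 = 3^N * k" using assms(1) by (auto elim: dvdE)
  have sq: "(3::int)^(N+1) dvd (g-1)^2"
  proof -
    have e: "N + N = (N+1) + (N-1)" using assms(2) by arith
    have "(3::int)^N * 3^N = 3^(N+1) * 3^(N-1)" by (metis e power_add)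
    then have "(g-1)^2 = 3^(N+1) * (3^(N-1) * k^2)" using k
      by (simp add: power2_eq_square algebra_simps)
    then show ?thesis by simp
  qed
  have "[g^i * g = (1 + int i * (g-1)) * g] (mod 3^(N+1))" using Suc by (simp add: cong_mult)
  moreover have "(1 + int i * (g-1)) * g = (1 + int (Suc i) * (g-1)) + int i * (g-1)^2"
    by (simp add: power2_eq_square algebra_simps)
  moreover have "[(1 + int (Suc i) * (g-1)) + int i * (g-1)^2 = 1 + int (Suc i) * (g-1)] (mod 3^(N+1))"
    using sq by (simp add: cong_iff_dvd_diff)
  ultimately show ?case by (metis cong_trans power_Suc2)
qed

lemma unit3: fixes z dd :: int assumes "\<not> 3 dvd z" shows "\<exists>i::nat. 3 dvd (dd - int i * z)"
proof -
  have "z mod 3 = 1 \<or> z mod 3 = 2" using assms by presburger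
  moreover have "dd mod 3 = 0 \<or> dd mod 3 = 1 \<or> dd mod 3 = 2" by presburger
  ultimately have "3 dvd (dd - int 0 * z) \<or> 3 dvd (dd - int 1 * z) \<or> 3 dvd (dd - int 2 * z)" by presburger
  then show ?thesis by blast
qed

lemma liftX: fixes g c X Y :: int
  assumes "g - 1 = 3^N * c" "\<not> 3 dvd c" "N \<ge> 1" "\<not> 3 dvd X" "[X = Y] (mod 3^N)"
  shows "\<exists>j. [g^j * X = Y] (mod 3^(N+s))"
proof (induction s)
  case 0 then show ?case using assms(5) by (intro exI[of _ 0]) simp
next
  case (Suc s)
  then obtain j where j: "[g^j * X = Y] (mod 3^(N+s))" by blast
  then have "(3::int)^(N+s) dvd Y - g^j*X" using cong_sym cong_iff_dvd_diff by blast
  then obtain dd where dd: "Y - g^j*X = 3^(N+s) * dd" by (auto elim: dvdE)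
  obtain cs where cs: "g^(3^s) - 1 = 3^(N+s) * cs" "\<not> 3 dvd cs" using pow3_lift[OF assms(1-3)] by blast
  define G where "G = g^(3^s)"
  have g3: "\<not> 3 dvd g"
  proof
    assume a: "3 dvd g"
    have "(3::int) dvd 3^N" using assms(3) by (cases N) auto
    then have "3 dvd g - 1" using assms(1) by (metis dvd_mult2)
    with a have "(3::int) dvd g - (g - 1)" by (rule dvd_diff)
    then have "(3::int) dvd 1" by simp
    then show False by simp
  qed
  have gj: "\<not> 3 dvd g^j" using g3 prime3 prime_dvd_power by blast
  define z where "z = cs * (g^j * X)"
  have z3: "\<not> 3 dvd z" unfolding z_def using not3_mult cs(2) gj assms(4) by blast
  obtain i where i: "3 dvd (dd - int i * z)" using unit3[OF z3] by blast
  have "[G^i = 1 + int i * (G-1)] (mod 3^(N+s+1))"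
    using binom_cong[of "N+s" G i] cs(1) G_def assms(3) by simp
  then have "[g^j * X * G^i = g^j * X * (1 + int i * (G-1))] (mod 3^(N+s+1))" by (simp add: cong_mult)
  moreover have "[g^j * X * (1 + int i * (G-1)) = Y] (mod 3^(N+s+1))"
  proof -
    have "Y - g^j * X * (1 + int i * (G-1)) = 3^(N+s) * (dd - int i * z)"
      using dd cs(1) G_def z_def by (simp add: algebra_simps)
    moreover obtain r where "dd - int i * z = 3 * r" using i by (auto elim: dvdE)
    ultimately have "Y - g^j * X * (1 + int i * (G-1)) = 3^(N+s+1) * r" by simp
    then show ?thesis by (metis cong_iff_dvd_diff cong_sym dvd_triv_left)
  qed
  moreover have "g^j * X * G^i = g^(j + 3^s*i) * X" using G_def by (simp add: power_add power_mult[symmetric] algebra_simps)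
  ultimately have "[g^(j + 3^s*i) * X = Y] (mod 3^(N+s+1))" using cong_trans by metis
  then have "[g^(j + 3^s*i) * X = Y] (mod 3^(N+Suc s))" by simp
  then show ?case by blast
qed


lemma euler_int: fixes e :: int assumes "e > 0" "coprime (int a) e"
  shows "[(int a)^totient (nat e) = 1] (mod e)"
proof -
  have ie: "int (nat e) = e" using assms(1) by simp
  have "coprime (int a) (int (nat e))" unfolding ie by (rule assms(2))
  then have "coprime a (nat e)" by (simp only: coprime_int_iff)
  then have "[a^totient (nat e) = 1] (mod nat e)" by (rule euler_theorem)
  then have "[int (a^totient (nat e)) = int 1] (mod int (nat e))" using cong_int_iff by blast
  then show ?thesis using assms(1) by simp
qed

lemma powlift: fixes G c :: int assumes "G - 1 = 3^N * c" "\<not> 3 dvd c" "N \<ge> 1" "\<not> 3 dvd int m"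
  shows "\<exists>c'. G^m - 1 = 3^N * c' \<and> \<not> 3 dvd c'"
proof -
  have "[G = 1] (mod 3^N)" using assms(1) by (simp add: cong_iff_dvd_diff)
  then have "[G^m = 1^m] (mod 3^N)" by (rule cong_pow)
  then obtain c' where c': "G^m - 1 = 3^N * c'" by (auto simp add: cong_iff_dvd_diff elim: dvdE)
  have "[G^m = 1 + int m * (G-1)] (mod 3^(N+1))"
    using binom_cong[of N G m] assms(1,3) by simp
  then have "(3::int)^(N+1) dvd (G^m - 1) - int m * (G - 1)" by (simp add: cong_iff_dvd_diff algebra_simps)
  then have "(3::int)^N * 3 dvd 3^N * (c' - int m * c)" using c' assms(1) by (simp add: algebra_simps)
  then have "3 dvd c' - int m * c" by (simp add: mult_dvd_mono)
  moreover have "\<not> 3 dvd int m * c" using not3_mult assms by blast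
  ultimately have "\<not> 3 dvd c'"
  proof (intro notI)
    assume a: "3 dvd c' - int m * c" "\<not> 3 dvd int m * c" "3 dvd c'"
    then have "3 dvd c' - (c' - int m * c)" using dvd_diff by blast
    then show False using a(2) by simp
  qed
  then show ?thesis using c' by blast
qed

definition Rf :: "int \<Rightarrow> int \<Rightarrow> int \<Rightarrow> bool" where
  "Rf x e r \<longleftrightarrow> (\<forall>s::nat. \<forall>\<sigma>. \<exists>y. y > 0 \<and> merge x y \<and> [y = r] (mod e) \<and> [y = \<sigma>] (mod 3^s))"

lemma Rf_cong: "Rf x e r \<Longrightarrow> [r = r'] (mod e) \<Longrightarrow> Rf x e r'"
  unfolding Rf_def by (meson cong_trans)

lemma merge_T: "merge x (collatzT y) \<Longrightarrow> merge x y"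
  using merge_back[of x "collatzT y" 1 y] by simp

lemma half_inv: "(2::int) * ((3^s + 1) div 2) = 3^s + 1"
proof -
  have "odd ((3::int)^s)" by simp
  then obtain k where "(3::int)^s = 2*k+1" by (metis oddE)
  then show ?thesis by simp
qed

lemma Rf_double: assumes "Rf x e r" shows "Rf x e (2*r)"
  unfolding Rf_def
proof (intro allI)
  fix s :: nat and \<sigma> :: int
  obtain y where y: "y > 0" "merge x y" "[y = r] (mod e)" "[y = \<sigma> * ((3^s+1) div 2)] (mod 3^s)"
    using assms unfolding Rf_def by blast
  have "merge x (2*y)" using merge_T[of x "2*y"] y(2) by (simp add: T_double)
  moreover have "[2*y = 2*r] (mod e)" using y(3) by (simp add: cong_mult)
  moreover have "[2*y = \<sigma>] (mod 3^s)"
  proof -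
    have "[2*y = 2*(\<sigma> * ((3^s+1) div 2))] (mod 3^s)" using y(4) by (simp add: cong_mult)
    moreover have "2*(\<sigma> * ((3^s+1) div 2)) = \<sigma> + 3^s * \<sigma>" using half_inv[of s] by (simp add: algebra_simps)
    moreover have "[\<sigma> + 3^s * \<sigma> = \<sigma>] (mod 3^s)" by (simp add: cong_iff_dvd_diff)
    ultimately show ?thesis using cong_trans by metis
  qed
  ultimately show "\<exists>y. y > 0 \<and> merge x y \<and> [y = 2*r] (mod e) \<and> [y = \<sigma>] (mod 3^s)"
    using y(1) by (intro exI[of _ "2*y"]) simp
qed

lemma Rf_pow2: "Rf x e r \<Longrightarrow> Rf x e (2^k * r)"
  by (induction k) (auto simp add: mult.assoc dest: Rf_double)

lemma Rf_beta: assumes "Rf x e r" "[3*r' = 2*r - 1] (mod e)" "coprime 3 e"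
  shows "Rf x e r'"
  unfolding Rf_def
proof (intro allI)
  fix s :: nat and \<sigma> :: int
  define hh where "hh = ((3::int)^(s+1)+1) div 2"
  have hh: "2*hh = 3^(s+1)+1" unfolding hh_def by (rule half_inv)
  define \<tau> where "\<tau> = (3*\<sigma>+1) * hh"
  obtain y where y: "y > 0" "merge x y" "[y = r] (mod e)" "[y = \<tau>] (mod 3^(s+1))"
    using assms unfolding Rf_def by blast
  have "[2*y - 1 = 2*\<tau> - 1] (mod 3^(s+1))" using y(4) by (simp add: cong_mult cong_diff)
  moreover have "2*\<tau> - 1 = 3*\<sigma> + 3^(s+1)*(3*\<sigma>+1)"
  proof -
    have "2*\<tau> - 1 = (3*\<sigma>+1)*(2*hh) - 1" unfolding \<tau>_def by (simp add: algebra_simps)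
    also have "\<dots> = 3*\<sigma> + 3^(s+1)*(3*\<sigma>+1)" unfolding hh by (simp add: algebra_simps)
    finally show ?thesis .
  qed
  ultimately have "[2*y - 1 = 3*\<sigma> + 3^(s+1)*(3*\<sigma>+1)] (mod 3^(s+1))" by simp
  moreover have "[3*\<sigma> + 3^(s+1)*(3*\<sigma>+1) = 3*\<sigma>] (mod 3^(s+1))" by (simp add: cong_iff_dvd_diff)
  ultimately have "[2*y - 1 = 3*\<sigma>] (mod 3^(s+1))" by (rule cong_trans)
  then have "(3::int)^(s+1) dvd (2*y - 1) - 3*\<sigma>" by (simp add: cong_iff_dvd_diff)
  then obtain q where q: "2*y - 1 - 3*\<sigma> = 3^(s+1) * q" by (auto elim: dvdE)
  define y' where "y' = \<sigma> + 3^s * q"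
  have y'e: "3*y' = 2*y - 1" using q unfolding y'_def by (simp add: algebra_simps)
  have "odd y'"
  proof
    assume "even y'"
    then have "even (3*y')" by simp
    then show False using y'e by simp
  qed
  then have "collatzT y' = (3*y'+1) div 2" by (rule T_oddstep)
  then have "collatzT y' = y" using y'e by simp
  then have m: "merge x y'" using merge_T y(2) by metis
  have pos: "y' > 0" using y'e y(1) by linarith
  have "[y' = \<sigma>] (mod 3^s)" unfolding y'_def by (simp add: cong_iff_dvd_diff)
  moreover have "[y' = r'] (mod e)"
  proof -
    have "[3*y' = 2*r - 1] (mod e)" using y'e y(3) by (simp add: cong_mult cong_diff)
    then have "[3*y' = 3*r'] (mod e)" using assms(2) cong_sym cong_trans by metis
    then show ?thesis using cong_mult_lcancel assms(3) by blast
  qed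
  ultimately show "\<exists>y. y > 0 \<and> merge x y \<and> [y = r'] (mod e) \<and> [y = \<sigma>] (mod 3^s)"
    using m pos by blast
qed


locale modE =
  fixes e :: int
  assumes epos: "e > 0" and c2: "coprime 2 e" and c3: "coprime 3 e"
begin

definition "Lam = totient (nat e)"

lemma Lam_pos: "Lam > 0" unfolding Lam_def using epos by simp

lemma two_Lam: "[2^Lam = 1] (mod e)"
  using euler_int[of e 2] epos c2 unfolding Lam_def by simp

lemma three_Lam: "[3^Lam = 1] (mod e)"
  using euler_int[of e 3] epos c3 unfolding Lam_def by simp

lemma Rf_half: assumes "Rf x e r" "[2*r' = r] (mod e)" shows "Rf x e r'"
proof -
  have R: "Rf x e (2^(Lam-1) * r)" using Rf_pow2 assms(1) by blast
  have "[2*(2^(Lam-1)*r) = 2^Lam * r] (mod e)" using Lam_pos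
    by (metis Suc_diff_1 mult.assoc power_Suc cong_refl)
  moreover have "[2^Lam * r = 1 * r] (mod e)" by (rule cong_mult[OF two_Lam cong_refl])
  ultimately have "[2*(2^(Lam-1)*r) = 2*r'] (mod e)" using assms(2) cong_trans cong_sym by (metis mult_1)
  then have "[2^(Lam-1)*r = r'] (mod e)" using cong_mult_lcancel c2 by blast
  then show ?thesis using Rf_cong R by blast
qed

lemma Rf_betapow: "Rf x e r \<Longrightarrow> [3^i*(r'+1) = 2^i*(r+1)] (mod e) \<Longrightarrow> Rf x e r'"
proof (induction i arbitrary: r)
  case 0 then show ?case using Rf_cong cong_sym by (metis add.commute add_right_cancel cong_add_rcancel mult_1 power_0)
next
  case (Suc i)
  obtain i3 where i3: "[3*i3 = 1] (mod e)" using cong_solve_coprime_int c3 by blast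
  define r'' where "r'' = i3*(2*r - 1)"
  have b: "[3*r'' = 2*r - 1] (mod e)"
  proof -
    have "[3*i3*(2*r-1) = 1*(2*r-1)] (mod e)" by (rule cong_mult[OF i3 cong_refl])
    then show ?thesis unfolding r''_def by (simp add: mult.assoc)
  qed
  have R: "Rf x e r''" using Rf_beta Suc.prems(1) b c3 by blast
  have "[3*(3^i*(r'+1)) = 3*(2^i*(r''+1))] (mod e)"
  proof -
    have "[3*(2^i*(r''+1)) = 2^i*(3*r''+3)] (mod e)" by (simp add: algebra_simps)
    moreover have "[2^i*(3*r''+3) = 2^i*((2*r-1)+3)] (mod e)" by (rule cong_mult[OF cong_refl cong_add[OF b cong_refl]])
    ultimately have "[3*(2^i*(r''+1)) = 2^Suc i*(r+1)] (mod e)" using cong_trans by (fastforce simp add: algebra_simps)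
    moreover have "3*(3^i*(r'+1)) = 3^Suc i*(r'+1)" by simp
    ultimately show ?thesis using Suc.prems(2) cong_trans cong_sym by metis
  qed
  then have "[3^i*(r'+1) = 2^i*(r''+1)] (mod e)" using cong_mult_lcancel c3 by blast
  then show ?case using Suc.IH R by blast
qed

lemma Rf_invbeta: assumes "Rf x e r" "[2*r' = 3*r + 1] (mod e)" shows "Rf x e r'"
proof -
  have L: "Lam = Suc (Lam - 1)" using Lam_pos by simp
  have "[2*(3^(Lam-1)*(r'+1)) = 2*(2^(Lam-1)*(r+1))] (mod e)"
  proof -
    have "[2*(3^(Lam-1)*(r'+1)) = 3^(Lam-1)*(2*r'+2)] (mod e)" by (simp add: algebra_simps)
    moreover have "[3^(Lam-1)*(2*r'+2) = 3^(Lam-1)*((3*r+1)+2)] (mod e)" by (rule cong_mult[OF cong_refl cong_add[OF assms(2) cong_refl]])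
    moreover have "3^(Lam-1)*((3*r+1)+2) = 3^Lam * (r+1)" using L by (metis add.assoc mult.assoc one_plus_numeral semiring_norm(3) distrib_left mult_1_right power_Suc2 mult.commute)
    moreover have "[3^Lam * (r+1) = 1*(r+1)] (mod e)" by (rule cong_mult[OF three_Lam cong_refl])
    moreover have "[2^Lam * (r+1) = 1*(r+1)] (mod e)" by (rule cong_mult[OF two_Lam cong_refl])
    moreover have "2^Lam * (r+1) = 2*(2^(Lam-1)*(r+1))" using L by (metis mult.assoc power_Suc)
    ultimately show ?thesis using cong_trans cong_sym by metis
  qed
  then have "[3^(Lam-1)*(r'+1) = 2^(Lam-1)*(r+1)] (mod e)" using cong_mult_lcancel c2 by blast
  then show ?thesis using Rf_betapow assms(1) by blast
qed


lemma Rf_minus1: assumes "Rf x e r" shows "Rf x e (r - 1)"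
proof -
  obtain i2 where i2: "[2*i2 = 1] (mod e)" using cong_solve_coprime_int c2 by blast
  obtain i3 where i3: "[3*i3 = 1] (mod e)" using cong_solve_coprime_int c3 by blast
  have h: "[2*(i2*z) = z] (mod e)" for z
  proof -
    have "[2*i2*z = 1*z] (mod e)" by (rule cong_mult[OF i2 cong_refl])
    then show ?thesis by (simp add: mult.assoc)
  qed
  define q1 where "q1 = i2*(i2*r)"
  have R1: "Rf x e q1" unfolding q1_def using Rf_half[OF Rf_half[OF assms h] h] .
  define q2 where "q2 = i3*(2*q1 - 1)"
  have "[3*q2 = 2*q1 - 1] (mod e)"
  proof -
    have "[3*i3*(2*q1-1) = 1*(2*q1-1)] (mod e)" by (rule cong_mult[OF i3 cong_refl])
    then show ?thesis unfolding q2_def by (simp add: mult.assoc)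
  qed
  then have R2: "Rf x e q2" using Rf_beta R1 c3 by blast
  define q3 where "q3 = 2*q2"
  have R3: "Rf x e q3" unfolding q3_def using Rf_double R2 by blast
  define q4 where "q4 = i2*(3*q3+1)"
  have R4: "Rf x e q4" using Rf_invbeta[OF R3] h unfolding q4_def by blast
  have R5: "Rf x e (2*q4)" using Rf_double R4 by blast
  define u where "u = 2*i2"
  define v where "v = 3*i3"
  have "2*q4 = u*(v*(u^2*r - 2) + 1)"
    unfolding q4_def q3_def q2_def q1_def u_def v_def by (simp add: power2_eq_square algebra_simps)
  moreover have "[u*(v*(u^2*r - 2) + 1) = 1*(1*(1^2*r - 2) + 1)] (mod e)"
  proof -
    have hu: "[u = 1] (mod e)" unfolding u_def by (rule i2)
    have hv: "[v = 1] (mod e)" unfolding v_def by (rule i3)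
    show ?thesis by (intro cong_mult cong_add cong_diff cong_pow cong_refl hu hv)
  qed
  ultimately have "[2*q4 = r - 1] (mod e)" by simp
  then show ?thesis using Rf_cong R5 by blast
qed

lemma Rf_all: assumes "Rf x e r" shows "Rf x e r'"
proof -
  have "Rf x e (r - int k)" for k
    by (induction k) (use assms in \<open>auto dest: Rf_minus1 simp: algebra_simps\<close>)
  moreover have "int (nat ((r - r') mod e)) = (r - r') mod e" using epos by simp
  ultimately have "Rf x e (r - (r - r') mod e)" by metis
  moreover have "[r - (r - r') mod e = r'] (mod e)"
  proof -
    have "r - (r - r') mod e - r' = e * ((r - r') div e)" using minus_mod_eq_mult_div[of "r - r'" e] by simp
    then show ?thesis by (simp add: cong_iff_dvd_diff)
  qed
  ultimately show ?thesis using Rf_cong by blast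
qed


lemma Rf_exists: assumes xpos: "x > 0" shows "\<exists>r. Rf x e r"
proof -
  obtain i0 where w3: "\<not> 3 dvd (collatzT ^^ i0) x" using exists_non3[OF xpos] by blast
  define w where "w = (collatzT ^^ i0) x"
  have wpos: "w > 0" unfolding w_def using funpow_pos xpos by blast
  have w3': "\<not> 3 dvd w" using w3 unfolding w_def .
  have mw0: "merge x w" unfolding w_def by (rule merge_refl_orbit)
  have mw: "merge x (2^k * w)" for k
    using merge_back[OF mw0 funpow_double[of k w]] .
  obtain v L' where vL: "int Lam = 3^v * L'" "\<not> 3 dvd L'" "L' > 0"
    using decomp[of 3 "int Lam"] Lam_pos by auto
  define n where "n = 1 + v"
  have Lam_eq: "Lam = 3^v * nat L'" using vL(1,3) by (metis nat_int nat_mult_distrib nat_power_eq of_nat_0_le_iff of_nat_numeral zero_le_power nat_numeral)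
  define g :: int where "g = 4^Lam"
  obtain c0 where c0: "(4::int)^(3^v) - 1 = 3^(1+v)*c0" "\<not> 3 dvd c0"
    using pow3_lift[of 4 1 1 v] by auto
  have gg: "g = (4^(3^v))^(nat L')" unfolding g_def Lam_eq by (simp add: power_mult)
  have "\<not> 3 dvd int (nat L')" using vL by simp
  then have "\<exists>c'::int. (4^(3^v))^(nat L') - 1 = 3^(1+v)*c' \<and> \<not> 3 dvd c'"
    using powlift[OF c0] by simp
  then obtain c1 where c1: "g - 1 = 3^n * c1" "\<not> 3 dvd c1"
    unfolding n_def gg by blast
  have n1: "n \<ge> 1" unfolding n_def by simp
  have g2: "g = (2^Lam)^2"
  proof -
    have f: "(4::int) = 2^2" by simp
    have "g = (2^2)^Lam" unfolding g_def by (subst f) (rule refl)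
    also have "\<dots> = (2^Lam)^2" by (metis power_mult mult.commute)
    finally show "g = (2^Lam)^2" .
  qed
  have g1: "[g = 1] (mod e)"
  proof -
    note g2
    moreover have "[(2^Lam)^2 = (1::int)^2] (mod e)" by (rule cong_pow[OF two_Lam])
    ultimately show ?thesis by simp
  qed
  define X where "X = (if w mod 3 = 2 then w else 2*w)"
  have X3: "\<not> 3 dvd X" unfolding X_def using w3' by presburger
  have Xm: "[X = -1] (mod 3^1)" unfolding X_def using w3' by (simp add: cong_iff_dvd_diff) presburger
  obtain j0 where j0: "[4^j0 * X = -1] (mod 3^(1+v))"
    using liftX[of 4 1 1 X "-1" v] X3 Xm by auto
  define k0 where "k0 = (if w mod 3 = 2 then 2*j0 else 2*j0+1)"
  define X0 :: int where "X0 = 2^k0 * w"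
  have "X0 = 4^j0 * X" unfolding X0_def k0_def X_def by (simp add: power_mult)
  then have X0m: "[X0 = -1] (mod 3^n)" using j0 unfolding n_def by simp
  have X03: "\<not> 3 dvd X0" unfolding X0_def using not3_mult w3' prime_dvd_power[of "3::int" 2 k0] by auto
  obtain u0 where u0: "X0 + 1 = 3^n * u0"
  proof -
    have "(3::int)^n dvd X0 - (-1)" using X0m by (simp only: cong_iff_dvd_diff)
    then show ?thesis using that by (auto elim: dvdE)
  qed
  define r where "r = 2^n * u0 - 1"
  have "Rf x e r" unfolding Rf_def
  proof (intro allI)
    fix s :: nat and \<sigma> :: int
    have "coprime ((2::int)^n) (3^s)" by simp
    then obtain h :: int where h: "[2^n * h = 1] (mod 3^s)" using cong_solve_coprime_int by blast
    define u where "u = h*(\<sigma>+1)"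
    define Y where "Y = 3^n * u - 1"
    have "[X0 = Y] (mod 3^n)"
    proof -
      have "[Y = -1] (mod 3^n)" unfolding Y_def by (simp add: cong_iff_dvd_diff)
      then show ?thesis using X0m cong_sym cong_trans by blast
    qed
    then obtain j where j: "[g^j * X0 = Y] (mod 3^(n+s))" using liftX[OF c1 n1 X03] by blast
    define Z where "Z = g^j * X0"
    have gj: "g^j = 2^(Lam*2*j)" unfolding g2 by (simp flip: power_mult)
    have Zeq: "Z = 2^(k0 + Lam*2*j) * w" unfolding Z_def X0_def gj
      by (simp add: power_add algebra_simps)
    have mZ: "merge x Z" using mw Zeq by simp
    have Zpos: "Z > 0" using Zeq wpos by simp
    obtain t where t: "Z - Y = 3^(n+s) * t"
      using j unfolding Z_def by (auto simp add: cong_iff_dvd_diff elim: dvdE)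
    define u' where "u' = 3^s * t + u"
    have Zu: "Z + 1 = 3^n * u'" using t unfolding u'_def Y_def by (simp add: power_add algebra_simps)
    define y where "y = 2^n * u' - 1"
    have "(collatzT ^^ n) y = Z" unfolding y_def using funpow_gadget Zu by (metis add_diff_cancel_right')
    then have my: "merge x y" using merge_back mZ by blast
    have "u' > 0"
    proof (rule ccontr)
      assume "\<not> u' > 0"
      then have "3^n * u' \<le> 0" by (simp add: mult_nonneg_nonpos)
      then show False using Zu Zpos by linarith
    qed
    moreover have p2: "(2::int)^n \<ge> 2" using power_increasing[of 1 n "2::int"] n1 by simp
    ultimately have "2 * 1 \<le> (2::int)^n * u'" by (intro mult_mono) auto
    then have ypos: "y > 0" unfolding y_def by simp
    have ys: "[y = \<sigma>] (mod 3^s)"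
    proof -
      have "y = 3^s * (2^n * t) + (2^n * h) * (\<sigma>+1) - 1" unfolding y_def u'_def u_def by (simp add: algebra_simps)
      moreover have "[3^s * (2^n * t) + (2^n * h) * (\<sigma>+1) - 1 = 0 + 1 * (\<sigma>+1) - 1] (mod 3^s)"
        by (intro cong_add cong_diff cong_mult h cong_refl) (simp add: cong_iff_dvd_diff)
      ultimately show ?thesis by simp
    qed
    have ye: "[y = r] (mod e)"
    proof -
      have "[Z = 1 * X0] (mod e)" unfolding Z_def by (intro cong_mult cong_pow[OF g1, simplified] cong_refl)
      then have "[Z + 1 = X0 + 1] (mod e)" by (simp add: cong_add)
      then have "[3^n * u' = 3^n * u0] (mod e)" using Zu u0 by simp
      moreover have "coprime ((3::int)^n) e" using c3 by simp
      ultimately have "[u' = u0] (mod e)" using cong_mult_lcancel by blast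
      then have "[2^n * u' - 1 = 2^n * u0 - 1] (mod e)" by (intro cong_diff cong_mult cong_refl)
      then show ?thesis unfolding y_def r_def .
    qed
    show "\<exists>y. y > 0 \<and> merge x y \<and> [y = r] (mod e) \<and> [y = \<sigma>] (mod 3^s)"
      using ypos my ye ys by blast
  qed
  then show ?thesis by blast
qed

end


theorem mainTheorem1:
  fixes f :: "nat \<Rightarrow> nat" and a d :: int
  assumes "a > 0" and "d > 0"
  shows "sufficient {2 ^ f n * (a + d * int n) | n. True}"
proof -
  obtain s d' where dd: "d = 2^s * d'" "\<not> 2 dvd d'" "d' > 0" using decomp[of 2 d] assms(2) by auto
  define b where "b = (collatzT ^^ s) a"
  have bpos: "b > 0" unfolding b_def using funpow_pos assms(1) by blast
  obtain m where m: "\<forall>q. (collatzT ^^ s) (a + 2^s*q) = b + 3^m * q" using T_shift unfolding b_def by blast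
  define D where "D = 3^m * d'"
  have Dpos: "D > 0" unfolding D_def using dd by simp
  have Dodd: "\<not> 2 dvd D" unfolding D_def using dd(2) by simp
  obtain t e where te: "D = 3^t * e" "\<not> 3 dvd e" "e > 0" using decomp[of 3 D] Dpos by auto
  have e2: "\<not> 2 dvd e" using Dodd te(1) by (metis dvd_mult)
  have c2: "coprime 2 e" using prime_imp_coprime[of "2::int" e] e2 by simp
  have c3: "coprime 3 e" using prime_imp_coprime[of "3::int" e] te(2) by simp
  interpret modE e using te(3) c2 c3 by unfold_locales
  have cD: "coprime (int 2) D" using prime_imp_coprime[of "2::int" D] Dodd by simp
  define LD where "LD = totient (nat D)"
  have LDpos: "LD > 0" unfolding LD_def using Dpos by simp
  have LD2: "[2^LD = 1] (mod D)" using euler_int[OF Dpos cD] unfolding LD_def by simp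
  show ?thesis unfolding sufficient_def
  proof (intro conjI ballI allI impI)
    fix z assume "z \<in> {2 ^ f n * (a + d * int n) | n. True}"
    then obtain n where z: "z = 2 ^ f n * (a + d * int n)" by blast
    have "d * int n \<ge> 0" using assms by simp
    then have "a + d * int n > 0" using assms by linarith
    then show "z > 0" unfolding z by simp
  next
    fix x :: int assume xpos: "x > 0"
    obtain r where "Rf x e r" using Rf_exists[OF xpos] by blast
    then have "Rf x e b" by (rule Rf_all)
    then obtain y where y: "y > 0" "merge x y" "[y = b] (mod e)" "[y = b] (mod 3^t)"
      unfolding Rf_def by blast
    have "coprime ((3::int)^t) e" using c3 by simp
    then have yD: "[y = b] (mod D)" using coprime_cong_mult[OF y(4) y(3)] te(1) by simp
    define K where "K = nat b"
    define y2 where "y2 = 2^(LD*K) * y"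
    have my2: "merge x y2" unfolding y2_def using merge_back[OF y(2) funpow_double] .
    have "[(2::int)^(LD*K) = 1^K] (mod D)" unfolding power_mult by (rule cong_pow[OF LD2])
    then have "[y2 = 1 * y] (mod D)" unfolding y2_def by (intro cong_mult cong_refl) simp
    then have y2D: "[y2 = b] (mod D)" using yD cong_trans by simp
    have "(2::int)^K \<le> 2^(LD*K)" using LDpos by (intro power_increasing) auto
    moreover have "int K < 2^K" using less_exp[of K] by (metis of_nat_less_iff of_nat_numeral of_nat_power)
    moreover have "int K = b" unfolding K_def using bpos by simp
    moreover have "2^(LD*K) * 1 \<le> 2^(LD*K) * y" using y(1) by (intro mult_left_mono) auto
    ultimately have y2b: "y2 \<ge> b" unfolding y2_def by linarith
    obtain q where q: "y2 - b = D * q" using y2D by (metis cong_iff_dvd_diff dvd_def)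
    have "q \<ge> 0" using q y2b Dpos by (metis diff_ge_0_iff_ge zero_le_mult_iff not_less)
    define N where "N = nat q"
    have y2eq: "y2 = b + D * int N" unfolding N_def using q \<open>q \<ge> 0\<close> by simp
    have "(collatzT ^^ s) (a + d * int N) = y2"
    proof -
      have eq: "a + d * int N = a + 2^s * (d' * int N)" using dd(1) by (simp add: algebra_simps)
      have "(collatzT ^^ s) (a + d * int N) = b + 3^m * (d' * int N)" unfolding eq by (rule m[rule_format])
      then show ?thesis using y2eq unfolding D_def by (simp add: algebra_simps)
    qed
    then have "merge x (a + d * int N)" using merge_back my2 by blast
    then have "merge x (2 ^ f N * (a + d * int N))" using merge_back funpow_double by blast
    then show "\<exists>z\<in>{2 ^ f n * (a + d * int n) | n. True}. merge x z" by blast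
  qed
qed

end
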